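(* Assume the standing setting below. Let $\alpha\in(0,1/6]$ with $\alpha n$ an integer, let $P_1\subseteq X$ with $|P_1|=\alpha n$, let $\beta\ge1$, and let $T_\alpha\subseteq P_1$ with $|T_\alpha|\le k_+$ satisfy $R(P_1,T_\alpha)\le\beta\min\{R(P_1,T):T\subseteq P_1,|T|\le k_+\}$. Let $\mathcal{B}_a$ be a $(\phi_\alpha/15)$-linear bin division of $X$ with respect to $\mathrm{OPT}$. Suppose $\mathcal{B}_a$ is trivial or well-represented in $P_1$ for $X$, and that for every $i$ with $|C_i^*|\ge\phi_\alpha$, $C_i^*$ is well-represented in $P_1$ for $X$. Then $$R(X^\alpha_{\mathrm{large}},T_\alpha)\le(18\beta+10)\,R(X,\mathrm{OPT}).$$
   Context: Standing setting: $(X,\rho)$ is a finite metric space with $|X|=n$; $k\ge 2$ is an integer and $\delta\in(0,1)$; $\log$ is the natural logarithm; $k_+:=k+38\log(32k/\delta)$. For nonempty $T\subseteq X$, $\rho(x,T):=\min_{y\in T}\rho(x,y)$ and $R(S,T):=\sum_{x\in S}\rho(x,T)$; ties are broken by a fixed ordering. $\mathrm{OPT}=\{c_1^*,\ldots,c_k^*\}$ is a set of at most $k$ points of $X$ minimizing $R(X,\cdot)$, and $C_i^*:=\{x\in X: i=\arg\min_{j\in[k]}\rho(c_j^*,x)\}$. For $\alpha>0$, $\phi_\alpha:=150\log(32k/\delta)/\alpha$; $X^\alpha_{\mathrm{large}}:=\bigcup\{C_i^*:|C_i^*|\ge\phi_\alpha\}$. For finite $W$, $A,B\subseteq W$, $B$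 is well-represented in $A$ for $W$ if $|B\cap A|/|B|\in[r/2,\frac32 r]$ with $r=|A|/|W|$; a bin division is well-represented if all its bins are. A $z$-linear bin division ($z>0$) of $W$ with respect to $T$ is a partition $(\mathcal{B}(1),\ldots,\mathcal{B}(L))$ of $W$ with: (1) if $z\le|W|$, $|\mathcal{B}(i)|\ge z(i+1)/2$ for all $i$; otherwise it is trivial, $\mathcal{B}(1):=W$; (2) $|\mathcal{B}(1)|\le\frac52 z$; (3) $|\mathcal{B}(i+1)|/|\mathcal{B}(i)|\le3/2$; (4) $\rho(x,T)\ge\rho(x',T)$ whenever $x\in\mathcal{B}(i)$, $x'\in\mathcal{B}(i+1)$. *)

theory Defs
  imports Complex_Main
begin

definition finite_metric :: "'a set \<Rightarrow> ('a \<Rightarrow> 'a \<Rightarrow> real) \<Rightarrow> bool" where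
  "finite_metric X \<rho> \<longleftrightarrow> finite X \<and> X \<noteq> {} \<and>
     (\<forall>x\<in>X. \<forall>y\<in>X. \<rho> x y \<ge> 0 \<and> (\<rho> x y = 0 \<longleftrightarrow> x = y) \<and> \<rho> x y = \<rho> y x) \<and>
     (\<forall>x\<in>X. \<forall>y\<in>X. \<forall>z\<in>X. \<rho> x z \<le> \<rho> x y + \<rho> y z)"

definition distS :: "('a \<Rightarrow> 'a \<Rightarrow> real) \<Rightarrow> 'a \<Rightarrow> 'a set \<Rightarrow> real" where
  "distS \<rho> x T = Min ((\<rho> x) ` T)"

definition Rcost :: "('a \<Rightarrow> 'a \<Rightarrow> real) \<Rightarrow> 'a set \<Rightarrow> 'a set \<Rightarrow> real" where
  "Rcost \<rho> S T = (\<Sum>x\<in>S. distS \<rho> x T)"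

definition kplus :: "nat \<Rightarrow> real \<Rightarrow> real" where
  "kplus k \<delta> = real k + 38 * ln (32 * real k / \<delta>)"

definition phi :: "nat \<Rightarrow> real \<Rightarrow> real \<Rightarrow> real" where
  "phi k \<delta> \<alpha> = 150 * ln (32 * real k / \<delta>) / \<alpha>"

text \<open>Optimal clusters C_i^*: centers c 1, ..., c k; x belongs to the cluster of the
  index j in {1..k} minimising rho(c_j, x), ties broken by the smallest index.\<close>
definition cluster :: "'a set \<Rightarrow> ('a \<Rightarrow> 'a \<Rightarrow> real) \<Rightarrow> nat \<Rightarrow> (nat \<Rightarrow> 'a) \<Rightarrow> nat \<Rightarrow> 'a set" where
  "cluster X \<rho> k c i = {x \<in> X. i = (LEAST j. j \<in> {1..k} \<and> (\<forall>j'\<in>{1..k}. \<rho> (c j) x \<le> \<rho> (c j') x))}"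

definition Xlarge :: "'a set \<Rightarrow> ('a \<Rightarrow> 'a \<Rightarrow> real) \<Rightarrow> nat \<Rightarrow> (nat \<Rightarrow> 'a) \<Rightarrow> real \<Rightarrow> real \<Rightarrow> 'a set" where
  "Xlarge X \<rho> k c \<delta> \<alpha> = \<Union>{cluster X \<rho> k c i | i. i \<in> {1..k} \<and> real (card (cluster X \<rho> k c i)) \<ge> phi k \<delta> \<alpha>}"

definition well_represented :: "'a set \<Rightarrow> 'a set \<Rightarrow> 'a set \<Rightarrow> bool" where
  "well_represented W A B \<longleftrightarrow>
     (let r = real (card A) / real (card W) in
       real (card (B \<inter> A)) / real (card B) \<in> {r / 2 .. 3 / 2 * r})"

definition linear_bin_division ::
  "('a \<Rightarrow> 'a \<Rightarrow> real) \<Rightarrow> real \<Rightarrow> 'a set \<Rightarrow> 'a set \<Rightarrow> nat \<Rightarrow> (nat \<Rightarrow> 'a set) \<Rightarrow> bool" where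
  "linear_bin_division \<rho> z W T L B \<longleftrightarrow>
     z > 0 \<and> L \<ge> 1 \<and>
     (\<Union>i\<in>{1..L}. B i) = W \<and>
     (\<forall>i\<in>{1..L}. \<forall>j\<in>{1..L}. i \<noteq> j \<longrightarrow> B i \<inter> B j = {}) \<and>
     (if z \<le> real (card W) then (\<forall>i\<in>{1..L}. real (card (B i)) \<ge> z * (real i + 1) / 2)
      else (L = 1 \<and> B 1 = W)) \<and>
     real (card (B 1)) \<le> 5 / 2 * z \<and>
     (\<forall>i. 1 \<le> i \<and> i < L \<longrightarrow> real (card (B (i + 1))) / real (card (B i)) \<le> 3 / 2) \<and>
     (\<forall>i. 1 \<le> i \<and> i < L \<longrightarrow> (\<forall>x\<in>B i. \<forall>x'\<in>B (i + 1). distS \<rho> x T \<ge> distS \<rho> x' T))"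

definition trivial_division :: "real \<Rightarrow> 'a set \<Rightarrow> bool" where
  "trivial_division z W \<longleftrightarrow> z > real (card W)"

end

theory Submission
  imports Defs
begin


lemma distS_le:
  assumes "finite T" "t \<in> T" shows "distS \<rho> x T \<le> \<rho> x t"
  unfolding distS_def using assms by (intro Min_le) auto

lemma distS_attained:
  assumes "finite T" "T \<noteq> {}" shows "\<exists>t\<in>T. distS \<rho> x T = \<rho> x t"
proof -
  have "Min ((\<rho> x) ` T) \<in> (\<rho> x) ` T" using assms by (intro Min_in) auto
  thus ?thesis unfolding distS_def by auto
qed

lemma distS_nonneg:
  assumes "finite_metric X \<rho>" "finite T" "T \<noteq> {}" "T \<subseteq> X" "x \<in> X"
  shows "distS \<rho> x T \<ge> 0"
proof -
  obtain t where "t \<in> T" "distS \<rho> x T = \<rho> x t" using distS_attained[OF assms(2,3), of \<rho>] by blast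
  thus ?thesis using assms unfolding finite_metric_def by auto
qed

lemma distS_tri:
  assumes "finite_metric X \<rho>" "finite T" "T \<noteq> {}" "T \<subseteq> X" "x \<in> X" "y \<in> X"
  shows "distS \<rho> x T \<le> \<rho> x y + distS \<rho> y T"
proof -
  obtain t where t: "t \<in> T" "distS \<rho> y T = \<rho> y t" using distS_attained[OF assms(2,3), of \<rho>] by blast
  have "distS \<rho> x T \<le> \<rho> x t" using distS_le[OF assms(2) t(1)] by blast
  also have "\<dots> \<le> \<rho> x y + \<rho> y t" using assms t unfolding finite_metric_def by blast
  finally show ?thesis using t by simp
qed

lemma Rcost_nonneg:
  assumes "finite_metric X \<rho>" "finite T" "T \<noteq> {}" "T \<subseteq> X" "S \<subseteq> X"
  shows "Rcost \<rho> S T \<ge> 0"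
  unfolding Rcost_def using assms by (intro sum_nonneg distS_nonneg[of X]) auto

lemma Rcost_mono:
  assumes "finite_metric X \<rho>" "finite T" "T \<noteq> {}" "T \<subseteq> X" "S \<subseteq> S'" "S' \<subseteq> X"
  shows "Rcost \<rho> S T \<le> Rcost \<rho> S' T"
proof -
  have "finite S'" using assms finite_subset unfolding finite_metric_def by blast
  moreover have "\<And>x. x \<in> S' - S \<Longrightarrow> 0 \<le> distS \<rho> x T"
    using assms by (intro distS_nonneg[of X]) auto
  ultimately show ?thesis unfolding Rcost_def using assms(5)
    by (intro sum_mono2) blast+
qed

lemma cluster_dist:
  assumes "finite_metric X \<rho>" "x \<in> cluster X \<rho> k c i" "c ` {1..k} \<subseteq> X" "k \<ge> 1"
  shows "i \<in> {1..k}" "distS \<rho> x (c ` {1..k}) = \<rho> x (c i)"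
proof -
  let ?P = "\<lambda>j. j \<in> {1..k} \<and> (\<forall>j'\<in>{1..k}. \<rho> (c j) x \<le> \<rho> (c j') x)"
  have xX: "x \<in> X" and ieq: "i = (LEAST j. ?P j)" using assms(2) unfolding cluster_def by auto
  have fin: "finite ((\<lambda>j. \<rho> (c j) x) ` {1..k})" by simp
  have ne: "(\<lambda>j. \<rho> (c j) x) ` {1..k} \<noteq> {}" using assms by auto
  obtain j where j: "j \<in> {1..k}" "\<rho> (c j) x = Min ((\<lambda>j. \<rho> (c j) x) ` {1..k})"
    using Min_in[OF fin ne] by auto
  have "?P j" using j fin by auto
  hence Pi: "?P i" unfolding ieq by (rule LeastI)
  thus "i \<in> {1..k}" by simp
  have sym: "\<And>y. y \<in> X \<Longrightarrow> \<rho> x y = \<rho> y x" using assms xX unfolding finite_metric_def by blast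
  have "c i \<in> c ` {1..k}" using Pi by auto
  hence le: "distS \<rho> x (c ` {1..k}) \<le> \<rho> x (c i)" by (intro distS_le) auto
  obtain t where t: "t \<in> c ` {1..k}" "distS \<rho> x (c ` {1..k}) = \<rho> x t"
  proof -
    have "c ` {1..k} \<noteq> {}" using assms by auto
    from distS_attained[OF _ this, of \<rho> x] show ?thesis using that by blast
  qed
  then obtain j' where j': "j' \<in> {1..k}" "t = c j'" by auto
  have ciX: "c i \<in> X" "c j' \<in> X" using Pi j' assms(3) by auto
  have "\<rho> (c i) x \<le> \<rho> (c j') x" using Pi j' by blast
  hence "\<rho> x (c i) \<le> \<rho> x (c j')" using sym[OF ciX(1)] sym[OF ciX(2)] by linarith
  thus "distS \<rho> x (c ` {1..k}) = \<rho> x (c i)" using le t j' by simp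
qed



theorem lemma7:
  fixes X :: "'a set" and \<rho> :: "'a \<Rightarrow> 'a \<Rightarrow> real" and k :: nat and \<delta> \<alpha> \<beta> :: real
    and c :: "nat \<Rightarrow> 'a" and P1 T\<alpha> :: "'a set" and L :: nat and B :: "nat \<Rightarrow> 'a set"
  assumes metric: "finite_metric X \<rho>"
    and k: "k \<ge> 2" and delta: "0 < \<delta>" "\<delta> < 1"
    and OPT_in: "c ` {1..k} \<subseteq> X"
    and OPT_opt: "\<And>T. T \<subseteq> X \<Longrightarrow> T \<noteq> {} \<Longrightarrow> card T \<le> k \<Longrightarrow>
                    Rcost \<rho> X (c ` {1..k}) \<le> Rcost \<rho> X T"
    and alpha: "0 < \<alpha>" "\<alpha> \<le> 1 / 6" "\<alpha> * real (card X) \<in> \<int>"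
    and P1: "P1 \<subseteq> X" "real (card P1) = \<alpha> * real (card X)"
    and beta: "\<beta> \<ge> 1"
    and Talpha: "T\<alpha> \<subseteq> P1" "T\<alpha> \<noteq> {}" "real (card T\<alpha>) \<le> kplus k \<delta>"
    and Talpha_approx: "\<And>T. T \<subseteq> P1 \<Longrightarrow> T \<noteq> {} \<Longrightarrow> real (card T) \<le> kplus k \<delta> \<Longrightarrow>
                    Rcost \<rho> P1 T\<alpha> \<le> \<beta> * Rcost \<rho> P1 T"
    and bins: "linear_bin_division \<rho> (phi k \<delta> \<alpha> / 15) X (c ` {1..k}) L B"
    and bins_wr: "trivial_division (phi k \<delta> \<alpha> / 15) X \<or>
                  (\<forall>i\<in>{1..L}. well_represented X P1 (B i))"
    and clusters_wr: "\<And>i. i \<in> {1..k} \<Longrightarrow> real (card (cluster X \<rho> k c i)) \<ge> phi k \<delta> \<alpha> \<Longrightarrow>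
                    well_represented X P1 (cluster X \<rho> k c i)"
  shows "Rcost \<rho> (Xlarge X \<rho> k c \<delta> \<alpha>) T\<alpha> \<le> (18 * \<beta> + 10) * Rcost \<rho> X (c ` {1..k})"
proof -
  let ?C = "c ` {1..k}"
  define z where "z = phi k \<delta> \<alpha> / 15"
  have finX: "finite X" and Xne: "X \<noteq> {}" using metric unfolding finite_metric_def by auto
  have finC: "finite ?C" by simp
  have Cne: "?C \<noteq> {}" using k by auto
  have k1: "k \<ge> 1" using k by simp
  have "32 * real k / \<delta> > 1" using k delta by (simp add: field_simps)
  hence lnpos: "ln (32 * real k / \<delta>) > 0" by simp
  have phipos: "phi k \<delta> \<alpha> > 0" unfolding phi_def using lnpos alpha by simp
  have RX0: "Rcost \<rho> X ?C \<ge> 0" using Rcost_nonneg[OF metric finC Cne OPT_in] by simp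
  have KX: "\<And>i. cluster X \<rho> k c i \<subseteq> X" by (auto simp: cluster_def)
  show ?thesis
  proof (cases "trivial_division z X")
    case True
    have "Xlarge X \<rho> k c \<delta> \<alpha> = {}"
    proof -
      have "\<And>i. real (card (cluster X \<rho> k c i)) < phi k \<delta> \<alpha>"
      proof -
        fix i
        have "card (cluster X \<rho> k c i) \<le> card X" using KX finX by (intro card_mono) auto
        hence "real (card (cluster X \<rho> k c i)) \<le> real (card X)" by simp
        also have "\<dots> < z" using True unfolding trivial_division_def by simp
        also have "\<dots> < phi k \<delta> \<alpha>" unfolding z_def using phipos by simp
        finally show "real (card (cluster X \<rho> k c i)) < phi k \<delta> \<alpha>" .
      qed
      thus ?thesis unfolding Xlarge_def by (auto simp: not_le[symmetric])
    qed
    then show ?thesis using RX0 beta by (simp add: Rcost_def)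
  next
    case False
    hence zle: "z \<le> real (card X)" unfolding trivial_division_def by simp
    from bins_wr False have wr: "\<forall>i\<in>{1..L}. well_represented X P1 (B i)" unfolding z_def by auto
    have zpos: "z > 0" unfolding z_def using phipos by simp
    from bins zle have L1: "L \<ge> 1" and cover: "(\<Union>i\<in>{1..L}. B i) = X"
      and disj: "\<forall>i\<in>{1..L}. \<forall>j\<in>{1..L}. i \<noteq> j \<longrightarrow> B i \<inter> B j = {}"
      and sizes: "\<forall>i\<in>{1..L}. real (card (B i)) \<ge> z * (real i + 1) / 2"
      and B1le: "real (card (B 1)) \<le> 5 / 2 * z"
      and ratio: "\<forall>i. 1 \<le> i \<and> i < L \<longrightarrow> real (card (B (i + 1))) / real (card (B i)) \<le> 3 / 2"
      and order: "\<forall>i. 1 \<le> i \<and> i < L \<longrightarrow> (\<forall>x\<in>B i. \<forall>x'\<in>B (i + 1). distS \<rho> x ?C \<ge> distS \<rho> x' ?C)"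
      unfolding linear_bin_division_def z_def by auto
    have nX: "real (card X) > 0" using finX Xne by (simp add: card_gt_0_iff)
    have BX: "\<And>i. i \<in> {1..L} \<Longrightarrow> B i \<subseteq> X" using cover by blast
    have finB: "\<And>i. i \<in> {1..L} \<Longrightarrow> finite (B i)" using BX finX finite_subset by blast
    have Bpos: "\<And>i. i \<in> {1..L} \<Longrightarrow> real (card (B i)) > 0"
    proof -
      fix i assume i: "i \<in> {1..L}"
      have "z * (real i + 1) / 2 > 0" using zpos by simp
      thus "real (card (B i)) > 0" using sizes i by fastforce
    qed
    have r: "real (card P1) / real (card X) = \<alpha>" using P1(2) nX by simp
    have Bwr: "\<And>i. i \<in> {1..L} \<Longrightarrow> real (card (B i \<inter> P1)) \<le> 3/2*\<alpha>*real (card (B i))"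
    proof -
      fix i assume i: "i \<in> {1..L}"
      have "real (card (B i \<inter> P1)) / real (card (B i)) \<le> 3/2*\<alpha>"
        using wr i r unfolding well_represented_def Let_def by auto
      thus "real (card (B i \<inter> P1)) \<le> 3/2*\<alpha>*real (card (B i))"
        using Bpos[OF i] by (simp add: divide_le_eq)
    qed
    have one: "1 \<in> {1..L}" using L1 by simp
    have P1B1: "real (card (P1 \<inter> B 1)) \<le> \<alpha> * phi k \<delta> \<alpha> / 4"
    proof -
      have "real (card (P1 \<inter> B 1)) \<le> 3/2*\<alpha>*real (card (B 1))" using Bwr[OF one] by (simp add: Int_commute)
      also have "\<dots> \<le> 3/2*\<alpha>*(5/2*z)" using B1le alpha by (intro mult_left_mono) auto
      also have "\<dots> = \<alpha> * phi k \<delta> \<alpha> / 4" unfolding z_def by simp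
      finally show ?thesis .
    qed
    have finP1: "finite P1" using P1 finX finite_subset by blast
    have P1ne: "P1 \<noteq> {}"
    proof
      assume "P1 = {}" hence "\<alpha> * real (card X) = 0" using P1(2) by simp
      thus False using alpha nX by simp
    qed
    have F2: "Rcost \<rho> (P1 - B 1) ?C \<le> 9/4*\<alpha>*Rcost \<rho> X ?C"
    proof -
      have eqU: "P1 - B 1 = (\<Union>j\<in>{1..<L}. P1 \<inter> B (j+1))"
      proof
        show "P1 - B 1 \<subseteq> (\<Union>j\<in>{1..<L}. P1 \<inter> B (j+1))"
        proof
          fix x assume x: "x \<in> P1 - B 1"
          hence "x \<in> X" using P1 by auto
          then obtain i where i: "i \<in> {1..L}" "x \<in> B i" using cover by blast
          hence "i \<noteq> 1" using x by auto
          hence "i - 1 \<in> {1..<L}" "i - 1 + 1 = i" using i by auto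
          thus "x \<in> (\<Union>j\<in>{1..<L}. P1 \<inter> B (j+1))" using i x by (intro UN_I[of "i - 1"]) auto
        qed
        show "(\<Union>j\<in>{1..<L}. P1 \<inter> B (j+1)) \<subseteq> P1 - B 1"
        proof
          fix x assume "x \<in> (\<Union>j\<in>{1..<L}. P1 \<inter> B (j+1))"
          then obtain j where j: "j \<in> {1..<L}" "x \<in> P1" "x \<in> B (j+1)" by blast
          have "B (j+1) \<inter> B 1 = {}" using disj j(1) one by auto
          thus "x \<in> P1 - B 1" using j by auto
        qed
      qed
      have "Rcost \<rho> (P1 - B 1) ?C = (\<Sum>j\<in>{1..<L}. Rcost \<rho> (P1 \<inter> B (j+1)) ?C)"
        unfolding Rcost_def eqU
      proof (rule sum.UNION_disjoint)
        show "finite {1..<L}" by simp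
        show "\<forall>j\<in>{1..<L}. finite (P1 \<inter> B (j + 1))" using finP1 by auto
        show "\<forall>i\<in>{1..<L}. \<forall>j\<in>{1..<L}. i \<noteq> j \<longrightarrow> P1 \<inter> B (i + 1) \<inter> (P1 \<inter> B (j + 1)) = {}"
        proof (intro ballI impI)
          fix i j assume "i \<in> {1..<L}" "j \<in> {1..<L}" "i \<noteq> j"
          hence "i+1 \<in> {1..L}" "j+1 \<in> {1..L}" "i+1 \<noteq> j+1" by auto
          hence "B (i+1) \<inter> B (j+1) = {}" using disj by blast
          thus "P1 \<inter> B (i + 1) \<inter> (P1 \<inter> B (j + 1)) = {}" by blast
        qed
      qed
      also have "\<dots> \<le> (\<Sum>j\<in>{1..<L}. 9/4*\<alpha>*Rcost \<rho> (B j) ?C)"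
      proof (rule sum_mono)
        fix j assume j: "j \<in> {1..<L}"
        have jL: "j \<in> {1..L}" "j+1 \<in> {1..L}" using j by auto
        define A where "A = Rcost \<rho> (B j) ?C / real (card (B j))"
        have Bjpos: "real (card (B j)) > 0" using Bpos[OF jL(1)] .
        have A0: "A \<ge> 0" unfolding A_def using Bjpos Rcost_nonneg[OF metric finC Cne OPT_in BX[OF jL(1)]] by simp
        have yb: "\<And>y. y \<in> B (j+1) \<Longrightarrow> distS \<rho> y ?C \<le> A"
        proof -
          fix y assume y: "y \<in> B (j+1)"
          have "\<And>x'. x' \<in> B j \<Longrightarrow> distS \<rho> y ?C \<le> distS \<rho> x' ?C" using order j y by auto
          hence "real (card (B j)) * distS \<rho> y ?C \<le> Rcost \<rho> (B j) ?C"
            unfolding Rcost_def using sum_bounded_below[of "B j" "distS \<rho> y ?C" "\<lambda>x. distS \<rho> x ?C"] by simp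
          thus "distS \<rho> y ?C \<le> A" unfolding A_def using Bjpos by (simp add: pos_le_divide_eq mult.commute)
        qed
        have "Rcost \<rho> (P1 \<inter> B (j+1)) ?C \<le> real (card (P1 \<inter> B (j+1))) * A"
          unfolding Rcost_def using yb by (intro sum_bounded_above) auto
        also have "\<dots> \<le> (3/2*\<alpha>*real (card (B (j+1)))) * A"
          using Bwr[OF jL(2)] A0 by (intro mult_right_mono) (auto simp: Int_commute)
        also have "\<dots> \<le> (3/2*\<alpha>*(3/2*real (card (B j)))) * A"
        proof -
          have "real (card (B (j + 1))) / real (card (B j)) \<le> 3 / 2" using ratio j by auto
          hence "real (card (B (j + 1))) \<le> 3/2*real (card (B j))" using Bjpos by (simp add: divide_le_eq)
          thus ?thesis using A0 alpha by (intro mult_right_mono mult_left_mono) auto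
        qed
        also have "\<dots> = 9/4*\<alpha>*Rcost \<rho> (B j) ?C" unfolding A_def using Bjpos by (simp add: field_simps)
        finally show "Rcost \<rho> (P1 \<inter> B (j+1)) ?C \<le> 9/4*\<alpha>*Rcost \<rho> (B j) ?C" .
      qed
      also have "\<dots> = 9/4*\<alpha>*(\<Sum>j\<in>{1..<L}. Rcost \<rho> (B j) ?C)" by (simp add: sum_distrib_left)
      also have "\<dots> \<le> 9/4*\<alpha>*(\<Sum>j\<in>{1..L}. Rcost \<rho> (B j) ?C)"
      proof -
        have "(\<Sum>j\<in>{1..<L}. Rcost \<rho> (B j) ?C) \<le> (\<Sum>j\<in>{1..L}. Rcost \<rho> (B j) ?C)"
          using Rcost_nonneg[OF metric finC Cne OPT_in] BX by (intro sum_mono2) auto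
        thus ?thesis using alpha by (intro mult_left_mono) auto
      qed
      also have "(\<Sum>j\<in>{1..L}. Rcost \<rho> (B j) ?C) = Rcost \<rho> X ?C"
        unfolding Rcost_def cover[symmetric]
        by (rule sum.UNION_disjoint[symmetric]) (use finB disj in auto)
      finally show ?thesis .
    qed
    have F3: "Rcost \<rho> P1 T\<alpha> \<le> 2*\<beta>*Rcost \<rho> (P1 - B 1) ?C"
    proof -
      have "\<forall>x. \<exists>q. q \<in> P1 \<and> (\<forall>q'\<in>P1. \<rho> x q \<le> \<rho> x q')"
      proof
        fix x
        obtain t where t: "t \<in> P1" "distS \<rho> x P1 = \<rho> x t" using distS_attained[OF finP1 P1ne, of \<rho> x] by blast
        have "\<forall>q'\<in>P1. \<rho> x t \<le> \<rho> x q'" using distS_le[OF finP1, of _ \<rho> x] t by fastforce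
        thus "\<exists>q. q \<in> P1 \<and> (\<forall>q'\<in>P1. \<rho> x q \<le> \<rho> x q')" using t by blast
      qed
      then obtain p where p: "\<And>x. p x \<in> P1" "\<And>x q'. q' \<in> P1 \<Longrightarrow> \<rho> x (p x) \<le> \<rho> x q'" by metis
      define T' where "T' = p ` ?C \<union> (P1 \<inter> B 1)"
      have T'sub: "T' \<subseteq> P1" unfolding T'_def using p by auto
      have T'ne: "T' \<noteq> {}" unfolding T'_def using Cne by auto
      have finT': "finite T'" using T'sub finP1 finite_subset by blast
      have cardT': "real (card T') \<le> kplus k \<delta>"
      proof -
        have "card T' \<le> card (p ` ?C) + card (P1 \<inter> B 1)" unfolding T'_def by (rule card_Un_le)
        moreover have "card (p ` ?C) \<le> k"
          using card_image_le[of "{1..k}" c] card_image_le[of ?C p] by simp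
        ultimately have "real (card T') \<le> real k + \<alpha> * phi k \<delta> \<alpha> / 4" using P1B1 by linarith
        also have "\<alpha> * phi k \<delta> \<alpha> / 4 = 75/2 * ln (32 * real k / \<delta>)" unfolding phi_def using alpha by simp
        finally show ?thesis unfolding kplus_def using lnpos by linarith
      qed
      have T'X: "T' \<subseteq> X" using T'sub P1 by blast
      have split: "Rcost \<rho> P1 T' = Rcost \<rho> (P1 - B 1) T' + Rcost \<rho> (P1 \<inter> B 1) T'"
      proof -
        have "P1 = (P1 - B 1) \<union> (P1 \<inter> B 1)" by blast
        hence "Rcost \<rho> P1 T' = Rcost \<rho> ((P1 - B 1) \<union> (P1 \<inter> B 1)) T'" by simp
        also have "\<dots> = Rcost \<rho> (P1 - B 1) T' + Rcost \<rho> (P1 \<inter> B 1) T'"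
          unfolding Rcost_def using finP1 by (intro sum.union_disjoint) auto
        finally show ?thesis .
      qed
      have zero: "Rcost \<rho> (P1 \<inter> B 1) T' \<le> 0"
        unfolding Rcost_def
      proof (rule sum_nonpos)
        fix y assume y: "y \<in> P1 \<inter> B 1"
        hence "y \<in> T'" unfolding T'_def by auto
        hence "distS \<rho> y T' \<le> \<rho> y y" using distS_le[OF finT'] by blast
        also have "\<rho> y y = 0" using metric y P1 unfolding finite_metric_def by auto
        finally show "distS \<rho> y T' \<le> 0" .
      qed
      have two: "Rcost \<rho> (P1 - B 1) T' \<le> 2 * Rcost \<rho> (P1 - B 1) ?C"
        unfolding Rcost_def sum_distrib_left
      proof (rule sum_mono)
        fix y assume y: "y \<in> P1 - B 1"
        hence yX: "y \<in> X" using P1 by auto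
        obtain t where t: "t \<in> ?C" "distS \<rho> y ?C = \<rho> y t" using distS_attained[OF finC Cne, of \<rho> y] by blast
        have tX: "t \<in> X" using t OPT_in by auto
        have ptX: "p t \<in> X" using p P1 by auto
        have "p t \<in> T'" unfolding T'_def using t by auto
        hence "distS \<rho> y T' \<le> \<rho> y (p t)" using distS_le[OF finT'] by blast
        also have "\<dots> \<le> \<rho> y t + \<rho> t (p t)" using metric yX tX ptX unfolding finite_metric_def by blast
        also have "\<rho> t (p t) \<le> \<rho> t y" using p y by auto
        also have "\<rho> t y = \<rho> y t" using metric yX tX unfolding finite_metric_def by blast
        finally show "distS \<rho> y T' \<le> 2 * distS \<rho> y ?C" using t by simp
      qed
      have "Rcost \<rho> P1 T\<alpha> \<le> \<beta> * Rcost \<rho> P1 T'" using Talpha_approx[OF T'sub T'ne cardT'] .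
      also have "\<dots> \<le> \<beta> * (2 * Rcost \<rho> (P1 - B 1) ?C)"
        using split zero two beta by (intro mult_left_mono) auto
      finally show ?thesis by simp
    qed
    have F5: "Rcost \<rho> (Xlarge X \<rho> k c \<delta> \<alpha>) T\<alpha> \<le> Rcost \<rho> X ?C + 4/\<alpha> * (Rcost \<rho> (P1 - B 1) ?C + Rcost \<rho> P1 T\<alpha>)"
    proof -
      define I where "I = {i \<in> {1..k}. real (card (cluster X \<rho> k c i)) \<ge> phi k \<delta> \<alpha>}"
      define S where "S i = cluster X \<rho> k c i \<inter> P1 - B 1" for i
      define f where "f y = distS \<rho> y ?C + distS \<rho> y T\<alpha>" for y
      have finTa: "finite T\<alpha>" using Talpha(1) finP1 finite_subset by blast
      have TaX: "T\<alpha> \<subseteq> X" using Talpha(1) P1 by blast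
      have finK: "\<And>i. finite (cluster X \<rho> k c i)" using KX finX finite_subset by blast
      have Kdisj: "\<And>i j. i \<noteq> j \<Longrightarrow> cluster X \<rho> k c i \<inter> cluster X \<rho> k c j = {}"
        by (auto simp: cluster_def)
      have f0: "\<And>y. y \<in> X \<Longrightarrow> f y \<ge> 0" unfolding f_def
        using distS_nonneg[OF metric finC Cne OPT_in] distS_nonneg[OF metric finTa Talpha(2) TaX] by (simp add: add_nonneg_nonneg)
      have F4: "\<And>i. i \<in> I \<Longrightarrow> Rcost \<rho> (cluster X \<rho> k c i) T\<alpha> \<le> Rcost \<rho> (cluster X \<rho> k c i) ?C + 4/\<alpha> * sum f (S i)"
      proof -
        fix i assume i: "i \<in> I"
        let ?K = "cluster X \<rho> k c i"
        have ik: "i \<in> {1..k}" and cardK: "real (card ?K) \<ge> phi k \<delta> \<alpha>" using i unfolding I_def by auto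
        have Kpos: "real (card ?K) > 0" using cardK phipos by linarith
        have ciX: "c i \<in> X" using ik OPT_in by auto
        have "real (card (?K \<inter> P1)) / real (card ?K) \<ge> \<alpha>/2"
          using clusters_wr[OF ik cardK] r unfolding well_represented_def Let_def by auto
        hence KP: "real (card (?K \<inter> P1)) \<ge> \<alpha>/2 * real (card ?K)" using Kpos by (simp add: le_divide_eq)
        have cardS: "real (card (S i)) \<ge> \<alpha>/4 * real (card ?K)"
        proof -
          have fin1: "finite (?K \<inter> P1 \<inter> B 1)" using finP1 by auto
          have c1: "card (S i) = card (?K \<inter> P1) - card (?K \<inter> P1 \<inter> B 1)"
            unfolding S_def using card_Diff_subset_Int[OF fin1] by simp
          have c2: "card (?K \<inter> P1 \<inter> B 1) \<le> card (?K \<inter> P1)" using finP1 by (intro card_mono) auto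
          have c3: "card (?K \<inter> P1 \<inter> B 1) \<le> card (P1 \<inter> B 1)" using finP1 by (intro card_mono) auto
          have "real (card (S i)) = real (card (?K \<inter> P1)) - real (card (?K \<inter> P1 \<inter> B 1))"
            using c1 c2 by simp
          moreover have "real (card (?K \<inter> P1 \<inter> B 1)) \<le> \<alpha> * phi k \<delta> \<alpha> / 4" using c3 P1B1 by linarith
          moreover have "\<alpha> * phi k \<delta> \<alpha> / 4 \<le> \<alpha> / 4 * real (card ?K)" using cardK alpha by simp
          ultimately show ?thesis using KP by linarith
        qed
        have Spos: "real (card (S i)) > 0" proof -
          have "\<alpha>/4 * real (card ?K) > 0" using Kpos alpha by simp
          thus ?thesis using cardS by linarith
        qed
        have SK: "S i \<subseteq> ?K" unfolding S_def by auto
        define D where "D = distS \<rho> (c i) T\<alpha>"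
        have Dle: "\<And>y. y \<in> S i \<Longrightarrow> D \<le> f y"
        proof -
          fix y assume y: "y \<in> S i"
          hence yK: "y \<in> ?K" and yX: "y \<in> X" using SK KX by auto
          have "D \<le> \<rho> (c i) y + distS \<rho> y T\<alpha>" unfolding D_def using distS_tri[OF metric finTa Talpha(2) TaX ciX yX] .
          also have "\<rho> (c i) y = \<rho> y (c i)" using metric ciX yX unfolding finite_metric_def by blast
          also have "\<rho> y (c i) = distS \<rho> y ?C" using cluster_dist(2)[OF metric yK OPT_in k1] by simp
          finally show "D \<le> f y" unfolding f_def by simp
        qed
        have Q0: "sum f (S i) \<ge> 0" using f0 SK KX by (intro sum_nonneg) auto
        have "real (card (S i)) * D \<le> sum f (S i)" using sum_bounded_below[of "S i" D f] Dle by simp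
        hence DQ: "D \<le> sum f (S i) / real (card (S i))" using Spos by (simp add: pos_le_divide_eq mult.commute)
        have "Rcost \<rho> ?K T\<alpha> \<le> (\<Sum>x\<in>?K. distS \<rho> x ?C + D)"
          unfolding Rcost_def
        proof (rule sum_mono)
          fix x assume x: "x \<in> ?K"
          hence xX: "x \<in> X" using KX by auto
          have "distS \<rho> x T\<alpha> \<le> \<rho> x (c i) + D" unfolding D_def using distS_tri[OF metric finTa Talpha(2) TaX xX ciX] .
          thus "distS \<rho> x T\<alpha> \<le> distS \<rho> x ?C + D" using cluster_dist(2)[OF metric x OPT_in k1] by simp
        qed
        also have "\<dots> = Rcost \<rho> ?K ?C + real (card ?K) * D" unfolding Rcost_def by (simp add: sum.distrib)
        also have "real (card ?K) * D \<le> 4/\<alpha> * sum f (S i)"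
        proof -
          have "real (card ?K) * D \<le> real (card ?K) * (sum f (S i) / real (card (S i)))"
            using DQ Kpos by (intro mult_left_mono) auto
          also have "\<dots> \<le> 4/\<alpha> * sum f (S i)"
          proof -
            have "real (card ?K) \<le> 4/\<alpha> * real (card (S i))" using cardS alpha by (simp add: field_simps)
            hence "real (card ?K) * sum f (S i) \<le> 4/\<alpha> * real (card (S i)) * sum f (S i)"
              using Q0 by (intro mult_right_mono) auto
            thus ?thesis using Spos by (simp add: field_simps)
          qed
          finally show ?thesis .
        qed
        finally show "Rcost \<rho> ?K T\<alpha> \<le> Rcost \<rho> ?K ?C + 4/\<alpha> * sum f (S i)" by simp
      qed
      have finI: "finite I" unfolding I_def by simp
      have XL: "Xlarge X \<rho> k c \<delta> \<alpha> = (\<Union>i\<in>I. cluster X \<rho> k c i)" unfolding Xlarge_def I_def by auto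
      have "Rcost \<rho> (Xlarge X \<rho> k c \<delta> \<alpha>) T\<alpha> = (\<Sum>i\<in>I. Rcost \<rho> (cluster X \<rho> k c i) T\<alpha>)"
        unfolding Rcost_def XL by (rule sum.UNION_disjoint) (use finI finK Kdisj in auto)
      also have "\<dots> \<le> (\<Sum>i\<in>I. Rcost \<rho> (cluster X \<rho> k c i) ?C + 4/\<alpha> * sum f (S i))"
        using F4 by (rule sum_mono)
      also have "\<dots> = (\<Sum>i\<in>I. Rcost \<rho> (cluster X \<rho> k c i) ?C) + 4/\<alpha> * (\<Sum>i\<in>I. sum f (S i))"
        by (simp add: sum.distrib sum_distrib_left)
      also have "(\<Sum>i\<in>I. Rcost \<rho> (cluster X \<rho> k c i) ?C) = Rcost \<rho> (\<Union>i\<in>I. cluster X \<rho> k c i) ?C"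
        unfolding Rcost_def by (rule sum.UNION_disjoint[symmetric]) (use finI finK Kdisj in auto)
      also have "\<dots> \<le> Rcost \<rho> X ?C" using KX by (intro Rcost_mono[OF metric finC Cne OPT_in]) auto
      also have "(\<Sum>i\<in>I. sum f (S i)) \<le> Rcost \<rho> (P1 - B 1) ?C + Rcost \<rho> P1 T\<alpha>"
      proof -
        have "(\<Sum>i\<in>I. sum f (S i)) = sum f (\<Union>i\<in>I. S i)"
          by (rule sum.UNION_disjoint[symmetric]) (use finI finP1 Kdisj in \<open>auto simp: S_def\<close>)
        also have "\<dots> \<le> sum f (P1 - B 1)"
          using f0 P1 finP1 by (intro sum_mono2) (auto simp: S_def)
        also have "\<dots> = Rcost \<rho> (P1 - B 1) ?C + Rcost \<rho> (P1 - B 1) T\<alpha>"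
          unfolding f_def Rcost_def by (simp add: sum.distrib)
        also have "Rcost \<rho> (P1 - B 1) T\<alpha> \<le> Rcost \<rho> P1 T\<alpha>"
          using P1 by (intro Rcost_mono[OF metric finTa Talpha(2) TaX]) auto
        finally show ?thesis by simp
      qed
      hence "4/\<alpha> * (\<Sum>i\<in>I. sum f (S i)) \<le> 4/\<alpha> * (Rcost \<rho> (P1 - B 1) ?C + Rcost \<rho> P1 T\<alpha>)"
        using alpha by (intro mult_left_mono) auto
      finally show ?thesis by simp
    qed
    have R0: "Rcost \<rho> (P1 - B 1) ?C \<ge> 0" using Rcost_nonneg[OF metric finC Cne OPT_in, of "P1 - B 1"] P1(1) by blast
    have "Rcost \<rho> (P1 - B 1) ?C + Rcost \<rho> P1 T\<alpha> \<le> (1 + 2*\<beta>) * Rcost \<rho> (P1 - B 1) ?C"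
      using F3 by (simp add: algebra_simps)
    also have "\<dots> \<le> (1 + 2*\<beta>) * (9/4*\<alpha>*Rcost \<rho> X ?C)" using F2 beta by (intro mult_left_mono) auto
    finally have "4/\<alpha> * (Rcost \<rho> (P1 - B 1) ?C + Rcost \<rho> P1 T\<alpha>) \<le> 4/\<alpha> * ((1 + 2*\<beta>) * (9/4*\<alpha>*Rcost \<rho> X ?C))"
      using alpha by (intro mult_left_mono) auto
    also have "\<dots> = (9 + 18*\<beta>) * Rcost \<rho> X ?C" using alpha by (simp add: field_simps)
    finally show ?thesis using F5 by (simp add: algebra_simps)
  qed
qed

end
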